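(* Let $\hat{L}$ be a virtual link diagram with $n$ classical crossings. Then there is a realization $L$ of $\hat{L}$ such that $uf(L) \le n$, and the crossing changes realizing $uf(L)$ can all be taken at crossings of $L$ that come from classical crossings of $\hat{L}$.
   Context: A virtual link diagram is an immersion of finitely many copies of $S^1$ in the plane whose double points are either classical crossings (with over/under information) or virtual crossings (without over/under information). A realization of a virtual link diagram is the classical link diagram obtained by choosing an over/under marking at each virtual crossing (so a diagram with $m$ virtual crossings has $2^m$ realizations). For a fixed classical link diagram $L$, the fixed unknotting number $uf(L)$ is the minimum number of crossing changes in the diagram $L$ needed to turn it into a diagram of the unlink (the trivial link with the same number of components). *)

theory Defs
  imports "HOL-Analysis.Analysis"
begin

text \<open>
  Plane = complex, space = complex \<times> real.
  A (virtual or classical) link diagram with k components is given by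
  c :: nat \<Rightarrow> real \<Rightarrow> complex, where c i (i < k) is a 1-periodic
  C^1 immersion (nonvanishing derivative), i.e. an immersed circle.
  Points of the disjoint union of circles are pairs (i,t) with i < k, 0 \<le> t < 1.
\<close>

definition preim :: "nat \<Rightarrow> (nat \<Rightarrow> real \<Rightarrow> complex) \<Rightarrow> complex \<Rightarrow> (nat \<times> real) set" where
  "preim k c p = {(i, t). i < k \<and> 0 \<le> t \<and> t < 1 \<and> c i t = p}"

definition dpoints :: "nat \<Rightarrow> (nat \<Rightarrow> real \<Rightarrow> complex) \<Rightarrow> complex set" where
  "dpoints k c = {p. card (preim k c p) = 2}"

text \<open>Generic immersion of finitely many circles in the plane: only transverse
  double points, finitely many of them, no triple points.\<close>
definition generic_immersion :: "nat \<Rightarrow> (nat \<Rightarrow> real \<Rightarrow> complex) \<Rightarrow> bool" where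
  "generic_immersion k c \<longleftrightarrow>
     (\<forall>i<k. (\<forall>t. c i (t + 1) = c i t)
        \<and> (\<forall>t. c i differentiable (at t))
        \<and> continuous_on UNIV (\<lambda>t. vector_derivative (c i) (at t))
        \<and> (\<forall>t. vector_derivative (c i) (at t) \<noteq> 0))
   \<and> (\<forall>p. finite (preim k c p) \<and> card (preim k c p) \<le> 2)
   \<and> finite (dpoints k c)
   \<and> (\<forall>p \<in> dpoints k c. \<forall>i s j t. (i, s) \<in> preim k c p \<and> (j, t) \<in> preim k c p
          \<and> (i, s) \<noteq> (j, t) \<longrightarrow>
          Im (cnj (vector_derivative (c i) (at s)) * vector_derivative (c j) (at t)) \<noteq> 0)"

text \<open>Virtual link diagram: generic immersion, a set cls of classical crossings
  (the other double points are virtual), and for each classical crossing p the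
  preimage ov p of p that is the over-strand.\<close>
definition virtual_diagram ::
  "nat \<Rightarrow> (nat \<Rightarrow> real \<Rightarrow> complex) \<Rightarrow> complex set \<Rightarrow> (complex \<Rightarrow> nat \<times> real) \<Rightarrow> bool" where
  "virtual_diagram k c cls ov \<longleftrightarrow> generic_immersion k c \<and> cls \<subseteq> dpoints k c
     \<and> (\<forall>p \<in> cls. ov p \<in> preim k c p)"

definition classical_diagram ::
  "nat \<Rightarrow> (nat \<Rightarrow> real \<Rightarrow> complex) \<Rightarrow> (complex \<Rightarrow> nat \<times> real) \<Rightarrow> bool" where
  "classical_diagram k c ov \<longleftrightarrow> virtual_diagram k c (dpoints k c) ov"

definition realization ::
  "nat \<Rightarrow> (nat \<Rightarrow> real \<Rightarrow> complex) \<Rightarrow> complex set \<Rightarrow> (complex \<Rightarrow> nat \<times> real)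
    \<Rightarrow> (complex \<Rightarrow> nat \<times> real) \<Rightarrow> bool" where
  "realization k c cls ov ov' \<longleftrightarrow> classical_diagram k c ov' \<and> (\<forall>p \<in> cls. ov' p = ov p)"

definition cross_change ::
  "nat \<Rightarrow> (nat \<Rightarrow> real \<Rightarrow> complex) \<Rightarrow> (complex \<Rightarrow> nat \<times> real) \<Rightarrow> complex set
    \<Rightarrow> complex \<Rightarrow> nat \<times> real" where
  "cross_change k c ov S p = (if p \<in> S then the_elem (preim k c p - {ov p}) else ov p)"

text \<open>Lifts of a classical diagram to space: continuous periodic heights such that the
  over-strand is higher at every crossing.\<close>
definition admissible_heights ::
  "nat \<Rightarrow> (nat \<Rightarrow> real \<Rightarrow> complex) \<Rightarrow> (complex \<Rightarrow> nat \<times> real) \<Rightarrow> (nat \<Rightarrow> real \<Rightarrow> real) \<Rightarrow> bool" where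
  "admissible_heights k c ov h \<longleftrightarrow>
     (\<forall>i<k. continuous_on UNIV (h i) \<and> (\<forall>t. h i (t + 1) = h i t))
   \<and> (\<forall>p \<in> dpoints k c. \<forall>j t. (j, t) \<in> preim k c p \<and> (j, t) \<noteq> ov p
          \<longrightarrow> h (fst (ov p)) (snd (ov p)) > h j t)"

definition space_link :: "nat \<Rightarrow> (nat \<Rightarrow> real \<Rightarrow> complex) \<Rightarrow> (nat \<Rightarrow> real \<Rightarrow> real) \<Rightarrow> (complex \<times> real) set" where
  "space_link k c h = {(c i t, h i t) | i t. i < k \<and> 0 \<le> t \<and> t \<le> 1}"

definition std_unlink :: "nat \<Rightarrow> (complex \<times> real) set" where
  "std_unlink k = {(of_nat (3 * i) + cis (2 * pi * t), 0) | i t. i < k \<and> 0 \<le> t \<and> t \<le> 1}"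

definition ambient_isotopic :: "(complex \<times> real) set \<Rightarrow> (complex \<times> real) set \<Rightarrow> bool" where
  "ambient_isotopic A B \<longleftrightarrow>
     (\<exists>H :: real \<Rightarrow> complex \<times> real \<Rightarrow> complex \<times> real.
        continuous_on ({0..1} \<times> UNIV) (\<lambda>(s, x). H s x)
      \<and> (\<forall>s \<in> {0..1}. \<exists>g. homeomorphism UNIV UNIV (H s) g)
      \<and> H 0 = id \<and> H 1 ` A = B)"

definition unlink_diagram :: "nat \<Rightarrow> (nat \<Rightarrow> real \<Rightarrow> complex) \<Rightarrow> (complex \<Rightarrow> nat \<times> real) \<Rightarrow> bool" where
  "unlink_diagram k c ov \<longleftrightarrow>
     (\<exists>h. admissible_heights k c ov h \<and> ambient_isotopic (space_link k c h) (std_unlink k))"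

definition uf :: "nat \<Rightarrow> (nat \<Rightarrow> real \<Rightarrow> complex) \<Rightarrow> (complex \<Rightarrow> nat \<times> real) \<Rightarrow> nat" where
  "uf k c ov = (LEAST m. \<exists>S. S \<subseteq> dpoints k c \<and> card S = m \<and> unlink_diagram k c (cross_change k c ov S))"

end

theory Submission
  imports Defs
begin


lemma per_nat: fixes g :: "real \<Rightarrow> 'a" assumes "\<forall>t. g (t + 1) = g t" shows "g (t + real n) = g t"
  proof (induction n)
  case (Suc n)
  have "g (t + real (Suc n)) = g ((t + real n) + 1)" by (simp add: algebra_simps)
  then show ?case using Suc assms by simp
qed simp

lemma per_int: fixes g :: "real \<Rightarrow> 'a" assumes "\<forall>t. g (t + 1) = g t" shows "g (t + of_int n) = g t"
proof (cases "n \<ge> 0")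
  case True
  then show ?thesis using per_nat[OF assms, of t "nat n"] by simp
next
  case False
  then show ?thesis using per_nat[OF assms, of "t + of_int n" "nat (-n)"] by simp
qed

lemma sin_add_int: "sin ((x::real) + 2 * pi * of_int n) = sin x"
  by (simp add: sin_add)
lemma cos_add_int: "cos ((x::real) + 2 * pi * of_int n) = cos x"
  by (simp add: cos_add)

lemma quot_lim0:
  fixes F :: "real \<Rightarrow> complex"
  assumes "(F has_vector_derivative D) (at 0)" "F 0 = 0"
  shows "((\<lambda>h. F h / of_real h) \<longlongrightarrow> D) (at 0)"
proof -
  have R: "((\<lambda>x. Re (F x)) has_field_derivative Re D) (at 0)" and I: "((\<lambda>x. Im (F x)) has_field_derivative Im D) (at 0)"
    using assms(1) has_vector_derivative_complex_iff by auto
  have R': "((\<lambda>h. Re (F h) / h) \<longlongrightarrow> Re D) (at 0)" using R[unfolded DERIV_def] assms(2) by simp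
  have I': "((\<lambda>h. Im (F h) / h) \<longlongrightarrow> Im D) (at 0)" using I[unfolded DERIV_def] assms(2) by simp
  have eI: "Im (z / of_real r) = Im z / r" for z r by (simp add: Im_divide of_real_def power2_eq_square)
  show ?thesis unfolding tendsto_complex_iff using R' I' by (simp add: eI)
qed

lemma sym_quot_lim:
  fixes g :: "real \<Rightarrow> complex"
  assumes "(g has_vector_derivative d) (at x)"
  shows "((\<lambda>v. (g (x+v) - g (x-v)) / of_real (sin (2 * pi * v))) \<longlongrightarrow> d / of_real pi) (at 0)"
proof -
  have d1: "((\<lambda>v. g (x+v)) has_vector_derivative d) (at 0)"
  proof -
    have h: "((\<lambda>v. x+v) has_vector_derivative 1) (at 0)"
      unfolding has_vector_derivative_def by (auto intro!: derivative_eq_intros)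
    have "(g has_vector_derivative d) (at ((\<lambda>v. x+v) 0))" using assms by simp
    from vector_diff_chain_at[OF h this] show ?thesis by (simp add: o_def)
  qed
  have d2: "((\<lambda>v. g (x-v)) has_vector_derivative -d) (at 0)"
  proof -
    have h: "((\<lambda>v. x-v) has_vector_derivative -1) (at 0)"
      unfolding has_vector_derivative_def by (auto intro!: derivative_eq_intros)
    have "(g has_vector_derivative d) (at ((\<lambda>v. x-v) 0))" using assms by simp
    from vector_diff_chain_at[OF h this] show ?thesis by (simp add: o_def)
  qed
  have "((\<lambda>v. g (x+v) - g (x-v)) has_vector_derivative (d - -d)) (at 0)"
    using has_vector_derivative_diff[OF d1 d2] .
  then have l1: "((\<lambda>h. (g (x+h) - g (x-h)) / of_real h) \<longlongrightarrow> 2*d) (at 0)"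
    using quot_lim0[of "\<lambda>v. g (x+v) - g (x-v)" "d - -d"] by simp
  have "((\<lambda>v. sin (2 * pi * v)) has_field_derivative (2*pi)) (at 0)"
    by (auto intro!: derivative_eq_intros)
  then have l2: "((\<lambda>h. sin (2 * pi * h) / h) \<longlongrightarrow> 2*pi) (at 0)" unfolding DERIV_def by simp
  have l2': "((\<lambda>h. complex_of_real (sin (2 * pi * h) / h)) \<longlongrightarrow> complex_of_real (2*pi)) (at 0)"
    using tendsto_of_real[OF l2] .
  have "((\<lambda>h. ((g (x+h) - g (x-h)) / of_real h) / complex_of_real (sin (2 * pi * h) / h)) \<longlongrightarrow> 2*d / complex_of_real (2*pi)) (at 0)"
    by (rule tendsto_divide[OF l1 l2']) simp
  moreover have "2*d / complex_of_real (2*pi) = d / of_real pi" by simp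
  moreover have "\<forall>\<^sub>F h in at 0. ((g (x+h) - g (x-h)) / of_real h) / complex_of_real (sin (2 * pi * h) / h)
      = (g (x+h) - g (x-h)) / of_real (sin (2 * pi * h))"
    unfolding eventually_at by (rule exI[of _ 1]) auto
  ultimately show ?thesis using Lim_transform_eventually by fastforce
qed



definition EE :: "(real \<Rightarrow> complex) \<Rightarrow> (real \<Rightarrow> complex) \<Rightarrow> real \<Rightarrow> real \<Rightarrow> complex" where
  "EE g g' b u = (if u = 0 then - g' b / of_real pi else if u = 1/2 then g' (b + 1/2) / of_real pi
     else (g (b-u) - g (b+u)) / of_real (sin (2 * pi * u)))"

lemma E_cont:
  fixes g :: "real \<Rightarrow> complex" and g' :: "real \<Rightarrow> complex"
  assumes per: "\<forall>t. g (t+1) = g t" and der: "\<forall>t. (g has_vector_derivative g' t) (at t)"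
  shows "continuous_on {0..1/2} (EE g g' b)"
proof -
  let ?E = "EE g g' b"
  let ?S = "{0..1/2::real}"
  have gc: "continuous_on UNIV g"
    using der has_vector_derivative_continuous continuous_at_imp_continuous_on by blast
  have Q: "((\<lambda>v. (g (x+v) - g (x-v)) / of_real (sin (2 * pi * v))) \<longlongrightarrow> g' x / of_real pi) (at 0)" for x
    using sym_quot_lim der by blast
  show ?thesis unfolding continuous_on_eq_continuous_within
  proof
    fix x assume x: "x \<in> ?S"
    consider "x = 0" | "x = 1/2" | "0 < x \<and> x < 1/2" using x by force
    then show "continuous (at x within ?S) ?E"
    proof cases
      case 1
      have "((\<lambda>v. -((g (b+v) - g (b-v)) / of_real (sin (2 * pi * v)))) \<longlongrightarrow> -(g' b / of_real pi)) (at 0)"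
        using tendsto_minus[OF Q[of b]] .
      then have l: "((\<lambda>v. -((g (b+v) - g (b-v)) / of_real (sin (2 * pi * v)))) \<longlongrightarrow> -(g' b / of_real pi)) (at 0 within ?S)"
        using tendsto_within_subset[OF _ subset_UNIV] by blast
      have ev: "\<forall>\<^sub>F v in at 0 within ?S. -((g (b+v) - g (b-v)) / of_real (sin (2 * pi * v))) = ?E v"
        unfolding eventually_at by (rule exI[of _ "1/2"]) (auto simp: EE_def minus_divide_left)
      have "(?E \<longlongrightarrow> -(g' b / of_real pi)) (at 0 within ?S)" by (rule Lim_transform_eventually[OF l ev])
      moreover have "?E 0 = -(g' b / of_real pi)" by (simp add: EE_def)
      ultimately show ?thesis unfolding continuous_within using 1 by simp
    next
      case 2
      define m where "m = b + 1/2"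
      have f: "filterlim (\<lambda>u. 1/2 - u) (at 0) (at (1/2) within ?S)"
      proof (rule filterlim_atI)
        show "((\<lambda>u. 1/2 - u) \<longlongrightarrow> (0::real)) (at (1/2) within ?S)"
          by (auto intro!: tendsto_eq_intros)
        show "\<forall>\<^sub>F u in at (1/2) within ?S. 1/2 - u \<noteq> (0::real)"
          unfolding eventually_at by (rule exI[of _ 1]) auto
      qed
      have l: "((\<lambda>u. (g (m + (1/2 - u)) - g (m - (1/2 - u))) / of_real (sin (2 * pi * (1/2 - u)))) \<longlongrightarrow> g' m / of_real pi) (at (1/2) within ?S)"
        using filterlim_compose[OF Q[of m] f] .
      have ev: "\<forall>\<^sub>F u in at (1/2) within ?S. (g (m + (1/2 - u)) - g (m - (1/2 - u))) / of_real (sin (2 * pi * (1/2 - u))) = ?E u"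
        unfolding eventually_at
      proof (rule exI[of _ "1/2"], safe)
        fix u assume u: "u \<in> ?S" "u \<noteq> 1/2" "dist u (1/2) < 1/2"
        then have u0: "u \<noteq> 0" by (auto simp: dist_real_def)
        have e1: "g (m + (1/2 - u)) = g (b - u)" using per[rule_format, of "b-u"] by (simp add: m_def algebra_simps)
        have e2: "g (m - (1/2 - u)) = g (b + u)" by (simp add: m_def algebra_simps)
        have e3: "sin (2 * pi * (1/2 - u)) = sin (2 * pi * u)"
        proof -
          have "2 * pi * (1/2 - u) = pi - 2 * pi * u" by (simp add: algebra_simps)
          then show ?thesis by simp
        qed
        show "(g (m + (1/2 - u)) - g (m - (1/2 - u))) / of_real (sin (2 * pi * (1/2 - u))) = ?E u"
          using u u0 e1 e2 e3 by (simp add: EE_def)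
      qed simp
      have "(?E \<longlongrightarrow> g' m / of_real pi) (at (1/2) within ?S)" by (rule Lim_transform_eventually[OF l ev])
      moreover have "?E (1/2) = g' m / of_real pi" by (simp add: EE_def m_def)
      ultimately show ?thesis unfolding continuous_within 2 by simp
    next
      case 3
      have sn: "sin (2 * pi * u) \<noteq> 0" if "u \<in> {0<..<1/2}" for u
      proof -
        have "0 < sin (2 * pi * u)" using that by (intro sin_gt_zero) auto
        then show ?thesis by simp
      qed
      have "continuous_on {0<..<1/2} (\<lambda>u. (g (b-u) - g (b+u)) / of_real (sin (2 * pi * u)))"
        using sn by (intro continuous_intros continuous_on_compose2[OF gc]) auto
      then have "continuous_on {0<..<1/2} ?E"
        by (rule continuous_on_eq) (auto simp: EE_def)
      then have "continuous (at x) ?E" using 3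
        by (simp add: continuous_on_eq_continuous_at)
      then show ?thesis using continuous_at_imp_continuous_within by blast
    qed
  qed
qed

lemma E_nz:
  fixes g :: "real \<Rightarrow> complex" and g' :: "real \<Rightarrow> complex"
  assumes "g' b \<noteq> 0" "g' (b + 1/2) \<noteq> 0" and "\<And>u. 0 < u \<Longrightarrow> u < 1/2 \<Longrightarrow> g (b-u) \<noteq> g (b+u)"
    and "u \<in> {0..1/2}"
  shows "EE g g' b u \<noteq> 0"
proof -
  have "sin (2 * pi * u) \<noteq> 0" if "0 < u" "u < 1/2"
  proof -
    have "0 < sin (2 * pi * u)" using that by (intro sin_gt_zero) auto
    then show ?thesis by simp
  qed
  then show ?thesis using assms by (auto simp: EE_def)
qed

lemma E_ident:
  fixes g :: "real \<Rightarrow> complex" and g' :: "real \<Rightarrow> complex"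
  assumes per: "\<forall>t. g (t+1) = g t" and nz: "EE g g' b u \<noteq> 0" and u: "u \<in> {0..1/2}"
  shows "(2 / EE g g' b u) * (g (b-u) - g (b+u)) = 2 * of_real (sin (2 * pi * u))"
proof -
  consider "u = 0" | "u = 1/2" | "0 < u \<and> u < 1/2" using u by force
  then show ?thesis
  proof cases
    case 2
    have "g (b - 1/2) = g (b + 1/2)" using per[rule_format, of "b - 1/2"] by (simp add: algebra_simps)
    then show ?thesis unfolding 2 by simp
  next
    case 3
    have s: "sin (2 * pi * u) \<noteq> 0"
    proof -
      have "0 < sin (2 * pi * u)" using 3 by (intro sin_gt_zero) auto
      then show ?thesis by simp
    qed
    have "g (b-u) - g (b+u) \<noteq> 0" using nz 3 by (auto simp: EE_def)
    then show ?thesis using 3 s by (simp add: EE_def field_simps)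
  qed simp
qed



definition Amap :: "(real \<Rightarrow> complex) \<Rightarrow> (real \<Rightarrow> complex) \<Rightarrow> real \<Rightarrow> complex \<times> real \<Rightarrow> complex \<times> real" where
  "Amap LL BB s = (\<lambda>p. (exp (of_real s * LL (snd p)) * fst p + of_real s * BB (snd p), snd p))"
definition Ainv :: "(real \<Rightarrow> complex) \<Rightarrow> (real \<Rightarrow> complex) \<Rightarrow> real \<Rightarrow> complex \<times> real \<Rightarrow> complex \<times> real" where
  "Ainv LL BB s = (\<lambda>p. ((fst p - of_real s * BB (snd p)) * exp (- (of_real s * LL (snd p))), snd p))"
definition Bmap :: "(real \<Rightarrow> real) \<Rightarrow> real \<Rightarrow> complex \<times> real \<Rightarrow> complex \<times> real" where
  "Bmap ff s = (\<lambda>p. (fst p, snd p + s * ff (Re (fst p))))"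
definition Cmap :: "real \<Rightarrow> complex \<times> real \<Rightarrow> complex \<times> real" where
  "Cmap s = (\<lambda>p. (of_real (Re (fst p)) + \<i> * of_real (Im (fst p) * cos (s * (pi / 2)) - snd p * sin (s * (pi / 2))),
                   Im (fst p) * sin (s * (pi / 2)) + snd p * cos (s * (pi / 2))))"

lemma cont_comp_UNIV:
  assumes "continuous_on UNIV F" "continuous_on S f"
  shows "continuous_on S (\<lambda>x. F (f x))"
  using continuous_on_compose2[OF assms(1) assms(2)] by auto

lemma A_homeo:
  assumes L: "continuous_on UNIV LL" and B: "continuous_on UNIV BB"
  shows "homeomorphism UNIV UNIV (Amap LL BB s) (Ainv LL BB s)"
proof (rule homeomorphismI)
  have cL: "continuous_on UNIV (\<lambda>p::complex\<times>real. LL (snd p))"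
    by (rule continuous_on_compose2[OF L continuous_on_snd]) auto
  have cB: "continuous_on UNIV (\<lambda>p::complex\<times>real. BB (snd p))"
    by (rule continuous_on_compose2[OF B continuous_on_snd]) auto
  show "continuous_on UNIV (Amap LL BB s)" unfolding Amap_def
    by (intro continuous_on_Pair continuous_on_add continuous_on_mult continuous_on_exp continuous_on_const cL cB continuous_on_fst continuous_on_snd continuous_on_id)
  show "continuous_on UNIV (Ainv LL BB s)" unfolding Ainv_def
    by (intro continuous_on_Pair continuous_on_diff continuous_on_minus continuous_on_mult continuous_on_exp continuous_on_const cL cB continuous_on_fst continuous_on_snd continuous_on_id)
  have e1: "exp a * w * exp (-a) = w" for a w :: complex
    by (metis exp_minus_inverse mult.commute mult.left_commute mult_1_right)
  have e2: "exp a * (w * exp (-a)) = w" for a w :: complex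
    by (metis exp_minus_inverse mult.commute mult.left_commute mult_1_right)
  show "Ainv LL BB s (Amap LL BB s x) = x" for x
    by (simp add: Amap_def Ainv_def e1)
  show "Amap LL BB s (Ainv LL BB s x) = x" for x
    by (simp add: Amap_def Ainv_def e2)
qed auto

lemma B_homeo:
  assumes F: "continuous_on UNIV ff"
  shows "homeomorphism UNIV UNIV (Bmap ff s) (Bmap ff (-s))"
proof (rule homeomorphismI)
  show "continuous_on UNIV (Bmap ff s)" for s unfolding Bmap_def
    by (intro continuous_on_Pair continuous_on_add continuous_on_mult continuous_on_const continuous_on_fst continuous_on_snd continuous_on_id cont_comp_UNIV[OF F] continuous_on_Re)
  then show "continuous_on UNIV (Bmap ff (-s))" .
qed (auto simp: Bmap_def)

lemma rot_inv: "(v * c - y * s) * c + (v * s + y * c) * s = (v::real)"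
  "- ((v * c - y * s) * s) + (v * s + y * c) * c = (y::real)" if "s^2 + c^2 = 1" for v y s c
  using that by algebra+

lemma C_inv: "Cmap (-s) (Cmap s p) = p"
proof -
  obtain a b where p: "p = (a, b)" by force
  have h: "(sin (s * pi / 2))^2 + (cos (s * pi / 2))^2 = 1" by simp
  have "(Im a * cos (s * pi / 2) - b * sin (s * pi / 2)) * cos (s * pi / 2) +
        (Im a * sin (s * pi / 2) + b * cos (s * pi / 2)) * sin (s * pi / 2) = Im a"
    using h by algebra
  moreover have "(Im a * sin (s * pi / 2) + b * cos (s * pi / 2)) * cos (s * pi / 2) -
        (Im a * cos (s * pi / 2) - b * sin (s * pi / 2)) * sin (s * pi / 2) = b"
    using h by algebra
  ultimately show ?thesis by (simp add: Cmap_def complex_eq_iff p)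
qed

lemma C_homeo: "homeomorphism UNIV UNIV (Cmap s) (Cmap (-s))"
proof (rule homeomorphismI)
  show "continuous_on UNIV (Cmap s)" for s unfolding Cmap_def
    by (intro continuous_on_Pair continuous_on_add continuous_on_diff continuous_on_mult continuous_on_exp continuous_on_const continuous_on_fst continuous_on_snd continuous_on_id continuous_on_of_real continuous_on_Re continuous_on_Im continuous_on_cos continuous_on_sin)
  then show "continuous_on UNIV (Cmap (-s))" .
  show "Cmap (- s) (Cmap s x) = x" for x by (rule C_inv)
  show "Cmap s (Cmap (- s) x) = x" for x using C_inv[of "-s" x] by simp
qed auto

lemma iso_gen:
  assumes L: "continuous_on UNIV LL" and B: "continuous_on UNIV BB" and F: "continuous_on UNIV ff"
    and img: "(\<lambda>x. Cmap 1 (Bmap ff 1 (Amap LL BB 1 x))) ` X = Y"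
  shows "ambient_isotopic X Y"
  unfolding ambient_isotopic_def
proof (intro exI[of _ "\<lambda>s x. Cmap s (Bmap ff s (Amap LL BB s x))"] conjI ballI)
  have "continuous_on UNIV (\<lambda>q. Cmap (fst q) (Bmap ff (fst q) (Amap LL BB (fst q) (snd q))))"
    unfolding Amap_def Bmap_def Cmap_def
    by (intro continuous_on_Pair continuous_on_add continuous_on_diff continuous_on_mult continuous_on_exp continuous_on_const continuous_on_fst continuous_on_snd continuous_on_id continuous_on_of_real continuous_on_Re continuous_on_Im continuous_on_cos continuous_on_sin cont_comp_UNIV[OF L] cont_comp_UNIV[OF B] cont_comp_UNIV[OF F])
  then show "continuous_on ({0..1} \<times> UNIV) (\<lambda>(s, x). Cmap s (Bmap ff s (Amap LL BB s x)))"
    using continuous_on_subset[OF _ subset_UNIV] by (simp add: case_prod_unfold)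
  show "\<exists>g. homeomorphism UNIV UNIV (\<lambda>x. Cmap s (Bmap ff s (Amap LL BB s x))) g" for s
    using homeomorphism_compose[OF homeomorphism_compose[OF A_homeo[OF L B, of s] B_homeo[OF F, of s]] C_homeo[of s]]
    by (auto simp: o_def)
  show "(\<lambda>x. Cmap 0 (Bmap ff 0 (Amap LL BB 0 x))) = id"
    by (auto simp: Amap_def Bmap_def Cmap_def complex_eq_iff)
  show "(\<lambda>x. Cmap 1 (Bmap ff 1 (Amap LL BB 1 x))) ` X = Y" by (rule img)
qed



definition HT :: "real \<Rightarrow> nat \<Rightarrow> real \<Rightarrow> real" where
  "HT b i t = - 4 * real i + cos (2 * pi * (t - b))"

definition goodb :: "nat \<Rightarrow> (nat \<Rightarrow> real \<Rightarrow> complex) \<Rightarrow> real \<Rightarrow> bool" where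
  "goodb k c b \<longleftrightarrow> 0 < b \<and> b < 1/2 \<and>
     (\<forall>p\<in>dpoints k c. \<forall>i s j t. (i,s) \<in> preim k c p \<and> (j,t) \<in> preim k c p \<longrightarrow> frac (s+t) \<noteq> 2*b)"

lemma gi_facts:
  assumes "generic_immersion k c"
  shows "\<And>i t. i < k \<Longrightarrow> c i (t + 1) = c i t"
    and "\<And>i t. i < k \<Longrightarrow> (c i has_vector_derivative vector_derivative (c i) (at t)) (at t)"
    and "\<And>i t. i < k \<Longrightarrow> vector_derivative (c i) (at t) \<noteq> 0"
    and "\<And>p. finite (preim k c p)" "\<And>p. card (preim k c p) \<le> 2"
    and "finite (dpoints k c)"
  using assms unfolding generic_immersion_def by (auto simp: vector_derivative_works[symmetric])

lemma choose_b:
  assumes gi: "generic_immersion k c"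
  shows "\<exists>b. goodb k c b"
proof -
  define U where "U = \<Union>(preim k c ` dpoints k c)"
  have fU: "finite U" unfolding U_def using gi_facts[OF gi] by auto
  define Bad where "Bad = (\<lambda>(x,y). frac (snd x + snd y)) ` (U \<times> U)"
  have fB: "finite Bad" unfolding Bad_def using fU by auto
  have "infinite ({0<..<1::real} - Bad)" using Diff_infinite_finite[OF fB] infinite_Ioo[of "0::real" 1] by auto
  then obtain x where x: "x \<in> {0<..<1::real}" "x \<notin> Bad" using infinite_imp_nonempty by blast
  have "goodb k c (x/2)" unfolding goodb_def
  proof (intro conjI ballI allI impI)
    fix p i s j t assume p: "p \<in> dpoints k c" and st: "(i,s) \<in> preim k c p \<and> (j,t) \<in> preim k c p"
    then have "((i,s),(j,t)) \<in> U \<times> U" unfolding U_def by auto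
    then have "frac (s+t) \<in> Bad" unfolding Bad_def by force
    then show "frac (s+t) \<noteq> 2 * (x/2)" using x by auto
  qed (use x in auto)
  then show ?thesis by blast
qed

lemma frac_two_sum:
  assumes "0 < b" "b < 1/2"
  shows "frac (frac (b - u) + frac (b + u)) = 2 * b"
proof -
  have "frac (b - u) + frac (b + u) = 2 * b + of_int (- \<lfloor>b - u\<rfloor> - \<lfloor>b + u\<rfloor>)"
    unfolding frac_def by simp
  then have "frac (frac (b - u) + frac (b + u)) = frac (2 * b)" by (simp only: frac_add_of_int_right)
  then show ?thesis using assms by (simp add: frac_eq)
qed

lemma preim_card2:
  assumes gi: "generic_immersion k c" and "x \<in> preim k c p" "y \<in> preim k c p" "x \<noteq> y"
  shows "p \<in> dpoints k c"
proof -
  have "{x, y} \<subseteq> preim k c p" using assms by auto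
  then have "card {x,y} \<le> card (preim k c p)" using gi_facts(4)[OF gi] card_mono by blast
  then have "2 \<le> card (preim k c p)" using assms(4) by simp
  then show ?thesis using gi_facts(5)[OF gi, of p] unfolding dpoints_def by simp
qed

lemma K1:
  assumes gi: "generic_immersion k c" and gb: "goodb k c b" and i: "i < k" and u: "0 < u" "u < 1/2"
  shows "c i (b - u) \<noteq> c i (b + u)"
proof
  assume eq: "c i (b - u) = c i (b + u)"
  have per: "\<forall>t. c i (t + 1) = c i t" using gi_facts(1)[OF gi i] by blast
  define s where "s = frac (b - u)"
  define t where "t = frac (b + u)"
  have cs: "c i s = c i (b - u)"
    using per_int[OF per, of s "\<lfloor>b - u\<rfloor>"] unfolding s_def frac_def by simp
  have ct: "c i t = c i (b + u)"
    using per_int[OF per, of t "\<lfloor>b + u\<rfloor>"] unfolding t_def frac_def by simp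
  define p where "p = c i (b - u)"
  have sp: "(i,s) \<in> preim k c p" unfolding preim_def p_def using i cs
    by (simp add: s_def frac_lt_1)
  have tp: "(i,t) \<in> preim k c p" unfolding preim_def p_def using i ct eq
    by (simp add: t_def frac_lt_1)
  have "s \<noteq> t"
  proof
    assume "s = t"
    then have "2 * u = of_int (\<lfloor>b + u\<rfloor> - \<lfloor>b - u\<rfloor>)" unfolding s_def t_def frac_def by simp
    then obtain m :: int where m: "2 * u = of_int m" by blast
    then have "0 < m" "m < 1" using u by linarith+
    then show False by simp
  qed
  then have pd: "p \<in> dpoints k c" using preim_card2[OF gi sp tp] by simp
  have "frac (s + t) \<noteq> 2 * b" using gb pd sp tp unfolding goodb_def by blast
  moreover have "frac (s + t) = 2 * b" unfolding s_def t_def using frac_two_sum gb unfolding goodb_def by blast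
  ultimately show False by simp
qed

lemma cos_eq_cases:
  fixes x y :: real
  assumes "cos x = cos y"
  shows "\<exists>n::int. x + y = 2 * pi * of_int n \<or> x - y = 2 * pi * of_int n"
proof -
  have "2 * sin ((x + y) / 2) * sin ((y - x) / 2) = 0" using cos_diff_cos[of x y] assms by simp
  then have "sin ((x + y) / 2) = 0 \<or> sin ((y - x) / 2) = 0" by simp
  then show ?thesis
  proof
    assume "sin ((x + y) / 2) = 0"
    then obtain n :: int where "(x + y) / 2 = of_int n * pi" using sin_zero_iff_int2 by blast
    then have "x + y = 2 * pi * of_int n" by (simp add: field_simps)
    then show ?thesis by blast
  next
    assume "sin ((y - x) / 2) = 0"
    then obtain n :: int where "(y - x) / 2 = of_int n * pi" using sin_zero_iff_int2 by blast
    then have "x - y = 2 * pi * of_int (-n)" by (simp add: field_simps)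
    then show ?thesis by blast
  qed
qed

lemma K2:
  assumes gi: "generic_immersion k c" and gb: "goodb k c b" and p: "p \<in> dpoints k c"
    and x: "(i,s) \<in> preim k c p" and y: "(j,t) \<in> preim k c p" and ne: "(i,s) \<noteq> (j,t)"
  shows "HT b i s \<noteq> HT b j t"
proof
  assume eq: "HT b i s = HT b j t"
  show False
  proof (cases "i = j")
    case False
    have "-1 \<le> cos (2 * pi * (s - b))" "cos (2 * pi * (s - b)) \<le> 1"
      "-1 \<le> cos (2 * pi * (t - b))" "cos (2 * pi * (t - b)) \<le> 1" by auto
    moreover have "real i + 1 \<le> real j \<or> real j + 1 \<le> real i" using False by linarith
    ultimately show False using eq unfolding HT_def by linarith
  next
    case True
    then have st: "s \<noteq> t" using ne by simp
    have s01: "0 \<le> s" "s < 1" and t01: "0 \<le> t" "t < 1" using x y unfolding preim_def by auto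
    have "cos (2 * pi * (s - b)) = cos (2 * pi * (t - b))" using eq True unfolding HT_def by simp
    then obtain n :: int where "2 * pi * (s - b) + 2 * pi * (t - b) = 2 * pi * of_int n \<or>
        2 * pi * (s - b) - 2 * pi * (t - b) = 2 * pi * of_int n" using cos_eq_cases by blast
    then have "s + t = 2 * b + of_int n \<or> s - t = of_int n"
    proof
      assume "2 * pi * (s - b) + 2 * pi * (t - b) = 2 * pi * of_int n"
      then have "2 * pi * ((s + t) - (2 * b + of_int n)) = 0" by (simp add: algebra_simps)
      then show ?thesis by simp
    next
      assume "2 * pi * (s - b) - 2 * pi * (t - b) = 2 * pi * of_int n"
      then have "2 * pi * ((s - t) - of_int n) = 0" by (simp add: algebra_simps)
      then show ?thesis by simp
    qed
    then show False
    proof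
      assume "s + t = 2 * b + of_int n"
      then have "frac (s + t) = frac (2 * b)" by (simp only: frac_add_of_int_right)
      also have "\<dots> = 2 * b" using gb unfolding goodb_def by (simp add: frac_eq)
      finally show False using gb p x y True unfolding goodb_def by blast
    next
      assume h: "s - t = of_int n"
      then have "-1 < real_of_int n" "real_of_int n < 1" using s01 t01 by linarith+
      then have "n = 0" by linarith
      then show False using h st by simp
    qed
  qed
qed



definition uu :: "nat \<Rightarrow> real \<Rightarrow> real" where
  "uu i y = arccos (max (-1) (min 1 (y + 4 * real i))) / (2 * pi)"
definition al :: "(nat \<Rightarrow> real \<Rightarrow> complex) \<Rightarrow> real \<Rightarrow> nat \<Rightarrow> real \<Rightarrow> complex" where
  "al c b i y = 2 / EE (c i) (\<lambda>t. vector_derivative (c i) (at t)) b (uu i y)"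
definition be :: "(nat \<Rightarrow> real \<Rightarrow> complex) \<Rightarrow> real \<Rightarrow> nat \<Rightarrow> real \<Rightarrow> complex" where
  "be c b i y = of_real (3 * real i + sin (2 * pi * uu i y)) - al c b i y * c i (b - uu i y)"
definition wt :: "nat \<Rightarrow> real \<Rightarrow> real" where
  "wt i y = max 0 (min 1 (2 - \<bar>y + 4 * real i\<bar>))"
definition LLf :: "nat \<Rightarrow> (nat \<Rightarrow> real \<Rightarrow> complex) \<Rightarrow> real \<Rightarrow> complex" where
  "LLf k Lg y = (\<Sum>i<k. of_real (wt i y) * Lg i y)"
definition BBf :: "nat \<Rightarrow> (nat \<Rightarrow> real \<Rightarrow> complex) \<Rightarrow> real \<Rightarrow> real \<Rightarrow> complex" where
  "BBf k c b y = (\<Sum>i<k. of_real (wt i y) * be c b i y)"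
definition fff :: "nat \<Rightarrow> real \<Rightarrow> real" where
  "fff k x = (\<Sum>i<k. 4 * max 0 (min 1 (x - 3 * real i - 1)))"

lemma uu_range: "uu i y \<in> {0..1/2}"
proof -
  let ?z = "max (-1) (min 1 (y + 4 * real i))"
  have "0 \<le> arccos ?z" "arccos ?z \<le> pi" by (auto intro!: arccos_lbound arccos_ubound)
  then show ?thesis unfolding uu_def by (auto simp: field_simps)
qed

lemma uu_cont: "continuous_on UNIV (uu i)"
  unfolding uu_def by (intro continuous_intros) auto

lemma c_cont:
  assumes gi: "generic_immersion k c" and i: "i < k"
  shows "continuous_on UNIV (c i)"
  using gi_facts(2)[OF gi i] has_vector_derivative_continuous continuous_at_imp_continuous_on by blast

lemma al_cont:
  assumes gi: "generic_immersion k c" and gb: "goodb k c b" and i: "i < k"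
  shows "continuous_on UNIV (al c b i)" "\<And>y. al c b i y \<noteq> 0"
proof -
  let ?E = "EE (c i) (\<lambda>t. vector_derivative (c i) (at t)) b"
  have per: "\<forall>t. c i (t + 1) = c i t" using gi_facts(1)[OF gi i] by blast
  have der: "\<forall>t. (c i has_vector_derivative vector_derivative (c i) (at t)) (at t)" using gi_facts(2)[OF gi i] by blast
  have Ec: "continuous_on {0..1/2} ?E" by (rule E_cont[OF per der])
  have Enz: "?E u \<noteq> 0" if "u \<in> {0..1/2}" for u
    by (rule E_nz) (use gi_facts(3)[OF gi i] K1[OF gi gb i] that in auto)
  have c1: "continuous_on UNIV (\<lambda>y. ?E (uu i y))"
    by (rule continuous_on_compose2[OF Ec uu_cont]) (use uu_range in auto)
  show "continuous_on UNIV (al c b i)" unfolding al_def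
    by (intro continuous_intros c1) (use Enz uu_range in auto)
  show "al c b i y \<noteq> 0" for y unfolding al_def using Enz[OF uu_range] by simp
qed

lemma be_cont:
  assumes gi: "generic_immersion k c" and gb: "goodb k c b" and i: "i < k"
  shows "continuous_on UNIV (be c b i)"
proof -
  have "continuous_on UNIV (\<lambda>y. c i (b - uu i y))"
    by (rule continuous_on_compose2[OF c_cont[OF gi i]]) (auto intro!: continuous_intros uu_cont)
  then show ?thesis unfolding be_def
    by (intro continuous_intros al_cont[OF gi gb i] uu_cont)
qed

lemma logs:
  assumes gi: "generic_immersion k c" and gb: "goodb k c b"
  shows "\<exists>Lg. \<forall>i<k. continuous_on UNIV (Lg i) \<and> (\<forall>y. al c b i y = exp (Lg i y))"
proof -
  have "\<forall>i. \<exists>L. i < k \<longrightarrow> continuous_on UNIV L \<and> (\<forall>y. al c b i y = exp (L y))"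
  proof
    fix i show "\<exists>L. i < k \<longrightarrow> continuous_on UNIV L \<and> (\<forall>y. al c b i y = exp (L y))"
    proof (cases "i < k")
      case True
      obtain L where "continuous_on UNIV L" "\<And>y. y \<in> UNIV \<Longrightarrow> al c b i y = exp (L y)"
        using continuous_logarithm_on_contractible[OF al_cont(1)[OF gi gb True] contractible_UNIV]
          al_cont(2)[OF gi gb True] by metis
      then show ?thesis by blast
    qed auto
  qed
  then show ?thesis by metis
qed

lemma wt_cont: "continuous_on UNIV (wt i)"
  unfolding wt_def by (intro continuous_intros)

lemma LL_cont: assumes "\<forall>i<k. continuous_on UNIV (Lg i)" shows "continuous_on UNIV (LLf k Lg)"
  unfolding LLf_def using assms by (intro continuous_intros continuous_on_sum) (auto intro: continuous_on_compose2[OF wt_cont])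

lemma BB_cont:
  assumes gi: "generic_immersion k c" and gb: "goodb k c b"
  shows "continuous_on UNIV (BBf k c b)"
  unfolding BBf_def using be_cont[OF gi gb] by (intro continuous_intros continuous_on_sum) (auto intro: continuous_on_compose2[OF wt_cont])

lemma ff_cont: "continuous_on UNIV (fff k)"
  unfolding fff_def by (intro continuous_intros)

lemma wt_at:
  assumes "\<bar>y + 4 * real i\<bar> \<le> 1"
  shows "wt i y = 1" "j \<noteq> i \<Longrightarrow> wt j y = 0"
proof -
  show "wt i y = 1" using assms unfolding wt_def by auto
  assume "j \<noteq> i"
  then have "real j + 1 \<le> real i \<or> real i + 1 \<le> real j" by linarith
  then have "\<bar>y + 4 * real j\<bar> \<ge> 3" using assms by linarith
  then show "wt j y = 0" unfolding wt_def by auto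
qed

lemma sum_at:
  assumes "\<bar>y + 4 * real i\<bar> \<le> 1" "i < k"
  shows "(\<Sum>j<k. of_real (wt j y) * F j) = (F i :: complex)"
proof -
  have "(\<Sum>j<k. of_real (wt j y) * F j) = (\<Sum>j\<in>{i}. of_real (wt j y) * F j)"
    by (rule sum.mono_neutral_right) (use assms wt_at in auto)
  then show ?thesis using wt_at(1)[OF assms(1)] by simp
qed

lemma ff_at:
  assumes "i < k" "3 * real i - 1 \<le> x" "x \<le> 3 * real i + 1"
  shows "fff k x = 4 * real i"
proof -
  have "fff k x = (\<Sum>j<k. if j < i then 4 else 0)"
    unfolding fff_def
  proof (rule sum.cong)
    fix j assume "j \<in> {..<k}"
    show "4 * max 0 (min 1 (x - 3 * real j - 1)) = (if j < i then 4 else 0)"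
    proof (cases "j < i")
      case True
      then have "real j + 1 \<le> real i" by linarith
      then show ?thesis using True assms by auto
    next
      case False
      then have "real i \<le> real j" by linarith
      then show ?thesis using False assms by auto
    qed
  qed simp
  also have "\<dots> = (\<Sum>j\<in>{j\<in>{..<k}. j < i}. (4::real))" by (rule sum.inter_filter[symmetric]) simp
  also have "{j\<in>{..<k}. j < i} = {..<i}" using assms by auto
  finally show ?thesis by simp
qed



lemma A_point:
  assumes gi: "generic_immersion k c" and gb: "goodb k c b" and i: "i < k"
    and Lg: "\<forall>i<k. continuous_on UNIV (Lg i) \<and> (\<forall>y. al c b i y = exp (Lg i y))"
  shows "Amap (LLf k Lg) (BBf k c b) 1 (c i t, HT b i t) =
     (of_real (3 * real i + sin (2 * pi * (b - t))), - 4 * real i + cos (2 * pi * (b - t)))"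
proof -
  define y where "y = HT b i t"
  define x where "x = 2 * pi * (t - b)"
  define u where "u = uu i y"
  have per: "\<forall>t. c i (t + 1) = c i t" using gi_facts(1)[OF gi i] by blast
  have yc: "y + 4 * real i = cos x" unfolding y_def HT_def x_def by simp
  have yb: "\<bar>y + 4 * real i\<bar> \<le> 1" unfolding yc by simp
  have L: "LLf k Lg y = Lg i y" unfolding LLf_def by (rule sum_at[OF yb i])
  have B: "BBf k c b y = be c b i y" unfolding BBf_def by (rule sum_at[OF yb i])
  have ea: "exp (complex_of_real 1 * LLf k Lg y) = al c b i y" using L Lg i by simp
  have th: "2 * pi * u = arccos (cos x)" unfolding u_def uu_def yc
  proof -
    have "max (-1) (min 1 (cos x)) = cos x" using cos_le_one[of x] cos_ge_minus_one[of x] by linarith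
    then show "2 * pi * (arccos (max (- 1) (min 1 (cos x))) / (2 * pi)) = arccos (cos x)" by simp
  qed
  have cth: "cos (2 * pi * u) = cos x" unfolding th by (rule cos_arccos) auto
  have ur: "u \<in> {0..1/2}" unfolding u_def by (rule uu_range)
  have Enz: "EE (c i) (\<lambda>t. vector_derivative (c i) (at t)) b u \<noteq> 0"
    using al_cont(2)[OF gi gb i, of y] unfolding al_def u_def by auto
  have ident: "al c b i y * (c i (b - u) - c i (b + u)) = 2 * of_real (sin (2 * pi * u))"
    using E_ident[OF per Enz ur] unfolding al_def u_def by simp
  obtain n :: int where n: "2 * pi * u + x = 2 * pi * of_int n \<or> 2 * pi * u - x = 2 * pi * of_int n"
    using cos_eq_cases[OF cth] by blast
  have val: "al c b i y * c i t + be c b i y = of_real (3 * real i + sin (2 * pi * (b - t)))"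
    using n
  proof
    assume h: "2 * pi * u + x = 2 * pi * of_int n"
    then have "2 * pi * (t - (b - u + of_int n)) = 0" unfolding x_def by (simp add: algebra_simps)
    then have tt: "t = (b - u) + of_int n" by simp
    have ct: "c i t = c i (b - u)" unfolding tt by (rule per_int[OF per])
    have "2 * pi * (b - t) = 2 * pi * u + 2 * pi * of_int (-n)" unfolding tt by (simp add: algebra_simps)
    then have st: "sin (2 * pi * (b - t)) = sin (2 * pi * u)" by (simp only: sin_add_int)
    show ?thesis unfolding ct st be_def u_def by simp
  next
    assume h: "2 * pi * u - x = 2 * pi * of_int n"
    then have "2 * pi * (t - (b + u + of_int (-n))) = 0" unfolding x_def by (simp add: algebra_simps)
    then have tt: "t = (b + u) + of_int (-n)" by simp
    have ct: "c i t = c i (b + u)" unfolding tt by (rule per_int[OF per])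
    have "2 * pi * (b - t) = - (2 * pi * u) + 2 * pi * of_int n" unfolding tt by (simp add: algebra_simps)
    then have st: "sin (2 * pi * (b - t)) = - sin (2 * pi * u)" by (simp only: sin_add_int sin_minus)
    have "al c b i y * c i t + be c b i y =
        of_real (3 * real i + sin (2 * pi * u)) - al c b i y * (c i (b - u) - c i (b + u))"
      unfolding ct be_def u_def by (simp add: algebra_simps)
    also have "\<dots> = of_real (3 * real i + sin (2 * pi * (b - t)))" unfolding ident st by simp
    finally show ?thesis .
  qed
  have hy: "y = - 4 * real i + cos (2 * pi * (b - t))"
  proof -
    have "cos (2 * pi * (b - t)) = cos (- (2 * pi * (t - b)))" by (simp add: algebra_simps)
    then show ?thesis unfolding y_def HT_def by simp
  qed
  show ?thesis unfolding Amap_def y_def[symmetric] using ea B val hy by simp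
qed

lemma H_point:
  assumes gi: "generic_immersion k c" and gb: "goodb k c b" and i: "i < k"
    and Lg: "\<forall>i<k. continuous_on UNIV (Lg i) \<and> (\<forall>y. al c b i y = exp (Lg i y))"
  shows "Cmap 1 (Bmap (fff k) 1 (Amap (LLf k Lg) (BBf k c b) 1 (c i t, HT b i t))) =
     (of_nat (3 * i) + cis (2 * pi * (b - t) - pi / 2), 0::real)"
proof -
  define ph where "ph = 2 * pi * (b - t)"
  have f: "fff k (3 * real i + sin ph) = 4 * real i"
    by (rule ff_at[OF i]) (use sin_le_one[of ph] sin_ge_minus_one[of ph] in linarith)+
  have "Bmap (fff k) 1 (of_real (3 * real i + sin ph), - 4 * real i + cos ph) = (of_real (3 * real i + sin ph), cos ph)"
    unfolding Bmap_def using f by simp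
  moreover have "Cmap 1 (of_real (3 * real i + sin ph), cos ph) = (of_nat (3 * i) + cis (ph - pi / 2), 0::real)"
    unfolding Cmap_def by (simp add: complex_eq_iff cos_diff sin_diff)
  ultimately show ?thesis using A_point[OF gi gb i Lg, of t] unfolding ph_def by simp
qed

lemma cis_shift: "cis (2 * pi * (x + of_int n)) = cis (2 * pi * x)"
proof -
  have "cis (2 * pi * (x + of_int n)) = cis (2 * pi * x) * cis (2 * pi * of_int n)"
    by (simp add: cis_mult algebra_simps)
  also have "cis (2 * pi * of_int n) = 1" by (rule cis_multiple_2pi) simp
  finally show ?thesis by simp
qed

lemma image_eq:
  assumes gi: "generic_immersion k c" and gb: "goodb k c b"
    and Lg: "\<forall>i<k. continuous_on UNIV (Lg i) \<and> (\<forall>y. al c b i y = exp (Lg i y))"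
  shows "(\<lambda>x. Cmap 1 (Bmap (fff k) 1 (Amap (LLf k Lg) (BBf k c b) 1 x))) ` space_link k c (HT b) = std_unlink k"
proof -
  have img: "(\<lambda>x. Cmap 1 (Bmap (fff k) 1 (Amap (LLf k Lg) (BBf k c b) 1 x))) ` space_link k c (HT b)
      = {(of_nat (3 * i) + cis (2 * pi * (b - t) - pi / 2), 0::real) | i t. i < k \<and> 0 \<le> t \<and> t \<le> 1}"
  proof (intro equalityI subsetI)
    fix z assume "z \<in> (\<lambda>x. Cmap 1 (Bmap (fff k) 1 (Amap (LLf k Lg) (BBf k c b) 1 x))) ` space_link k c (HT b)"
    then obtain i t where "z = Cmap 1 (Bmap (fff k) 1 (Amap (LLf k Lg) (BBf k c b) 1 (c i t, HT b i t)))"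
      "i < k" "0 \<le> t" "t \<le> 1" unfolding space_link_def by blast
    then show "z \<in> {(of_nat (3 * i) + cis (2 * pi * (b - t) - pi / 2), 0::real) | i t. i < k \<and> 0 \<le> t \<and> t \<le> 1}"
      using H_point[OF gi gb _ Lg] by blast
  next
    fix z assume "z \<in> {(of_nat (3 * i) + cis (2 * pi * (b - t) - pi / 2), 0::real) | i t. i < k \<and> 0 \<le> t \<and> t \<le> 1}"
    then obtain i t where z: "z = (of_nat (3 * i) + cis (2 * pi * (b - t) - pi / 2), 0::real)" "i < k" "0 \<le> t" "t \<le> 1" by blast
    then have "z = Cmap 1 (Bmap (fff k) 1 (Amap (LLf k Lg) (BBf k c b) 1 (c i t, HT b i t)))"
      using H_point[OF gi gb _ Lg] by simp
    moreover have "(c i t, HT b i t) \<in> space_link k c (HT b)" unfolding space_link_def using z by blast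
    ultimately show "z \<in> (\<lambda>x. Cmap 1 (Bmap (fff k) 1 (Amap (LLf k Lg) (BBf k c b) 1 x))) ` space_link k c (HT b)"
      by blast
  qed
  have e1: "cis (2 * pi * (b - t) - pi / 2) = cis (2 * pi * frac (b - t - 1/4))" for t
  proof -
    have "2 * pi * (b - t) - pi / 2 = 2 * pi * (frac (b - t - 1/4) + of_int \<lfloor>b - t - 1/4\<rfloor>)"
      unfolding frac_def by (simp add: algebra_simps)
    then show ?thesis using cis_shift by simp
  qed
  have e2: "cis (2 * pi * s) = cis (2 * pi * (b - frac (b - 1/4 - s)) - pi / 2)" for s
  proof -
    have "2 * pi * (b - frac (b - 1/4 - s)) - pi / 2 = 2 * pi * (s + of_int \<lfloor>b - 1/4 - s\<rfloor>)"
      unfolding frac_def by (simp add: algebra_simps)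
    then show ?thesis using cis_shift by simp
  qed
  show ?thesis unfolding img std_unlink_def
  proof (intro equalityI subsetI)
    fix z assume "z \<in> {(of_nat (3 * i) + cis (2 * pi * (b - t) - pi / 2), 0::real) | i t. i < k \<and> 0 \<le> t \<and> t \<le> 1}"
    then obtain i t where z: "z = (of_nat (3 * i) + cis (2 * pi * (b - t) - pi / 2), 0::real)" "i < k" by blast
    show "z \<in> {(of_nat (3 * i) + cis (2 * pi * t), 0::real) | i t. i < k \<and> 0 \<le> t \<and> t \<le> 1}"
      using z e1[of t] frac_ge_0[of "b - t - 1/4"] frac_lt_1[of "b - t - 1/4"] by fastforce
  next
    fix z assume "z \<in> {(of_nat (3 * i) + cis (2 * pi * t), 0::real) | i t. i < k \<and> 0 \<le> t \<and> t \<le> 1}"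
    then obtain i s where z: "z = (of_nat (3 * i) + cis (2 * pi * s), 0::real)" "i < k" by blast
    show "z \<in> {(of_nat (3 * i) + cis (2 * pi * (b - t) - pi / 2), 0::real) | i t. i < k \<and> 0 \<le> t \<and> t \<le> 1}"
      using z e2[of s] frac_ge_0[of "b - 1/4 - s"] frac_lt_1[of "b - 1/4 - s"] by fastforce
  qed
qed



lemma geo: assumes gi: "generic_immersion k c"
  shows "\<exists>ov. (\<forall>p\<in>dpoints k c. ov p \<in> preim k c p) \<and> unlink_diagram k c ov"
proof -
  obtain b where gb: "goodb k c b" using choose_b[OF gi] by blast
  obtain Lg where Lg: "\<forall>i<k. continuous_on UNIV (Lg i) \<and> (\<forall>y. al c b i y = exp (Lg i y))"
    using logs[OF gi gb] by blast
  define hh where "hh x = HT b (fst x) (snd x)" for x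
  define ov where "ov p = (SOME x. x \<in> preim k c p \<and> (\<forall>y\<in>preim k c p. y \<noteq> x \<longrightarrow> hh y < hh x))" for p
  have ovp: "ov p \<in> preim k c p \<and> (\<forall>y\<in>preim k c p. y \<noteq> ov p \<longrightarrow> hh y < hh (ov p))" if p: "p \<in> dpoints k c" for p
  proof -
    have "card (preim k c p) = 2" using p unfolding dpoints_def by simp
    then obtain x1 x2 where e: "preim k c p = {x1, x2}" "x1 \<noteq> x2" by (meson card_2_iff)
    have "hh x1 \<noteq> hh x2" unfolding hh_def using K2[OF gi gb p, of "fst x1" "snd x1" "fst x2" "snd x2"] e by (simp add: prod_eq_iff)
    then have "\<exists>x. x \<in> preim k c p \<and> (\<forall>y\<in>preim k c p. y \<noteq> x \<longrightarrow> hh y < hh x)"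
    proof (cases "hh x1 < hh x2")
      case True then show ?thesis using e by (intro exI[of _ x2]) auto
    next
      case False then have "hh x2 < hh x1" using \<open>hh x1 \<noteq> hh x2\<close> by linarith
      then show ?thesis using e by (intro exI[of _ x1]) auto
    qed
    then show ?thesis unfolding ov_def by (rule someI_ex)
  qed
  have adm: "admissible_heights k c ov (HT b)"
    unfolding admissible_heights_def
  proof (intro conjI allI impI ballI)
    fix i assume "i < k"
    show "continuous_on UNIV (HT b i)" unfolding HT_def by (intro continuous_intros)
    fix t
    have "2 * pi * (t + 1 - b) = 2 * pi * (t - b) + 2 * pi" by (simp add: algebra_simps)
    then show "HT b i (t + 1) = HT b i t" unfolding HT_def by simp
  next
    fix p j t assume p: "p \<in> dpoints k c" and jt: "(j, t) \<in> preim k c p \<and> (j, t) \<noteq> ov p"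
    have "hh (j, t) < hh (ov p)" using ovp[OF p] jt by blast
    then show "HT b j t < HT b (fst (ov p)) (snd (ov p))" unfolding hh_def by simp
  qed
  have iso: "ambient_isotopic (space_link k c (HT b)) (std_unlink k)"
  proof (rule iso_gen)
    show "continuous_on UNIV (LLf k Lg)" by (rule LL_cont) (use Lg in blast)
    show "continuous_on UNIV (BBf k c b)" by (rule BB_cont[OF gi gb])
    show "continuous_on UNIV (fff k)" by (rule ff_cont)
    show "(\<lambda>x. Cmap 1 (Bmap (fff k) 1 (Amap (LLf k Lg) (BBf k c b) 1 x))) ` space_link k c (HT b) = std_unlink k"
      by (rule image_eq[OF gi gb Lg])
  qed
  show ?thesis using ovp adm iso unfolding unlink_diagram_def by blast
qed




lemma preim_other:
  assumes "p \<in> dpoints k c" "x \<in> preim k c p" "y \<in> preim k c p" "x \<noteq> y"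
  shows "preim k c p - {x} = {y}"
proof -
  have c2: "card (preim k c p) = 2" using assms(1) unfolding dpoints_def by simp
  have f: "finite (preim k c p)" by (rule card_ge_0_finite) (simp add: c2)
  have "card (preim k c p - {x}) = 1" using c2 assms(2) f by simp
  then obtain z where z: "preim k c p - {x} = {z}" using card_1_singletonE by blast
  have "y \<in> preim k c p - {x}" using assms by simp
  then have "y = z" using z by simp
  then show ?thesis using z by simp
qed

lemma cc_in:
  assumes "\<forall>p\<in>dpoints k c. ov p \<in> preim k c p" "S \<subseteq> dpoints k c"
  shows "\<forall>p\<in>dpoints k c. cross_change k c ov S p \<in> preim k c p"
proof
  fix p assume p: "p \<in> dpoints k c"
  show "cross_change k c ov S p \<in> preim k c p"
  proof (cases "p \<in> S")
    case True
    have c2: "card (preim k c p) = 2" using p unfolding dpoints_def by simp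
    then obtain x y where "preim k c p = {x,y}" "x \<noteq> y" by (meson card_2_iff)
    then have "\<exists>y\<in>preim k c p. y \<noteq> ov p" using assms p by auto
    then obtain y where y: "y \<in> preim k c p" "y \<noteq> ov p" by blast
    have ovin: "ov p \<in> preim k c p" using assms(1) p by blast
    have "preim k c p - {ov p} = {y}" by (rule preim_other[OF p ovin y(1)]) (use y in simp)
    then show ?thesis using True y unfolding cross_change_def by simp
  qed (use assms p in \<open>auto simp: cross_change_def\<close>)
qed

theorem mainTheorem1:
  fixes k :: nat and c :: "nat \<Rightarrow> real \<Rightarrow> complex"
    and cls :: "complex set" and ov :: "complex \<Rightarrow> nat \<times> real"
  assumes "virtual_diagram k c cls ov"
  shows "\<exists>ov'. realization k c cls ov ov' \<and> uf k c ov' \<le> card cls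
           \<and> (\<exists>S \<subseteq> cls. card S = uf k c ov' \<and> unlink_diagram k c (cross_change k c ov' S))"
proof -
  have gi: "generic_immersion k c" and cd: "cls \<subseteq> dpoints k c" and ovp: "\<forall>p\<in>cls. ov p \<in> preim k c p"
    using assms unfolding virtual_diagram_def by auto
  have fin: "finite cls" using gi cd unfolding generic_immersion_def using finite_subset by blast
  obtain os where os: "\<forall>p\<in>dpoints k c. os p \<in> preim k c p" "unlink_diagram k c os"
    using geo[OF gi] by blast
  define ov0 where "ov0 p = (if p \<in> cls then ov p else os p)" for p
  define S0 where "S0 = {p \<in> cls. ov p \<noteq> os p}"
  have real0: "realization k c cls ov ov0"
    using gi os ovp cd unfolding realization_def classical_diagram_def virtual_diagram_def ov0_def
    by auto
  have "cross_change k c ov0 S0 = os"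
  proof
    fix p show "cross_change k c ov0 S0 p = os p"
    proof (cases "p \<in> S0")
      case True
      then have p: "p \<in> dpoints k c" "p \<in> cls" "ov p \<noteq> os p" using S0_def cd by auto
      have "preim k c p - {ov p} = {os p}" using preim_other[OF p(1)] p ovp os by auto
      then show ?thesis using True p unfolding cross_change_def ov0_def by simp
    qed (auto simp: cross_change_def ov0_def S0_def)
  qed
  define R where "R = {ov'. realization k c cls ov ov' \<and> (\<exists>S. S \<subseteq> dpoints k c \<and> unlink_diagram k c (cross_change k c ov' S))}"
  have "ov0 \<in> R" unfolding R_def using real0 \<open>cross_change k c ov0 S0 = os\<close> os S0_def cd by (auto intro!: exI[of _ S0])
  define m where "m = (LEAST m. \<exists>q \<in> R. uf k c q = m)"
  obtain ov1 where ov1: "ov1 \<in> R" "uf k c ov1 = m" unfolding m_def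
    using LeastI_ex[of "\<lambda>m. \<exists>q \<in> R. uf k c q = m"] \<open>ov0 \<in> R\<close> by blast
  have mmin: "\<And>q. q \<in> R \<Longrightarrow> m \<le> uf k c q" unfolding m_def by (auto intro: Least_le)
  have "\<exists>m S. S \<subseteq> dpoints k c \<and> card S = m \<and> unlink_diagram k c (cross_change k c ov1 S)"
    using ov1 unfolding R_def by blast
  then obtain S1 where S1: "S1 \<subseteq> dpoints k c" "card S1 = uf k c ov1" "unlink_diagram k c (cross_change k c ov1 S1)"
    unfolding uf_def using LeastI_ex[of "\<lambda>m. \<exists>S. S \<subseteq> dpoints k c \<and> card S = m \<and> unlink_diagram k c (cross_change k c ov1 S)"]
    by blast
  define ov2 where "ov2 = cross_change k c ov1 (S1 - cls)"
  have r1: "realization k c cls ov ov1" using ov1 R_def by auto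
  have real2: "realization k c cls ov ov2"
  proof -
    have "\<forall>p\<in>dpoints k c. ov1 p \<in> preim k c p" using r1 unfolding realization_def classical_diagram_def virtual_diagram_def by auto
    then have "\<forall>p\<in>dpoints k c. ov2 p \<in> preim k c p" unfolding ov2_def using cc_in S1 by blast
    moreover have "\<forall>p\<in>cls. ov2 p = ov p" using r1 unfolding ov2_def realization_def cross_change_def by auto
    ultimately show ?thesis using gi unfolding realization_def classical_diagram_def virtual_diagram_def by auto
  qed
  have eq: "cross_change k c ov2 (S1 \<inter> cls) = cross_change k c ov1 S1"
    unfolding ov2_def cross_change_def by (rule ext) auto
  have "ov2 \<in> R" unfolding R_def using real2 eq S1 by (intro CollectI conjI exI[of _ "S1 \<inter> cls"]) auto
  have le1: "uf k c ov2 \<le> card (S1 \<inter> cls)" unfolding uf_def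
    by (rule Least_le) (use eq S1 in \<open>auto intro!: exI[of _ "S1 \<inter> cls"]\<close>)
  have le2: "card (S1 \<inter> cls) \<le> card S1" using S1 gi unfolding generic_immersion_def
    by (metis Int_lower1 card_mono finite_subset)
  have le3: "uf k c ov1 \<le> uf k c ov2" using mmin[OF \<open>ov2 \<in> R\<close>] ov1 by simp
  have ceq: "card (S1 \<inter> cls) = uf k c ov2" using le1 le2 le3 S1 by linarith
  have le4: "card (S1 \<inter> cls) \<le> card cls" using fin by (simp add: card_mono)
  have ex: "\<exists>S\<subseteq>cls. card S = uf k c ov2 \<and> unlink_diagram k c (cross_change k c ov2 S)"
    using ceq eq S1(3) by (intro exI[of _ "S1 \<inter> cls"]) auto
  show ?thesis using real2 le4 ceq ex by (intro exI[of _ ov2]) simp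
qed


end
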